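(* If $X\ge0$ almost surely and $X$ is non-degenerate, then $X\notin\mathcal{D}^+$.
   Context: For real random variables, $X \le_{st} Y$ means $P(X\le t)\ge P(Y\le t)$ for all $t\in\mathbb{R}$. A real random variable $X$ (equivalently its distribution function $F_X$) belongs to $\mathcal{D}^+$ if for every $n\in\mathbb{N}$, all $\theta_1,\dots,\theta_n\ge 0$ with $\sum_{i=1}^n\theta_i=1$, and i.i.d. random variables $X_1,\dots,X_n$ with distribution $F_X$, we have $\sum_{i=1}^n\theta_iX_i\le_{st}X_1$. *)

theory Defs
  imports "HOL-Probability.Probability"
begin

definition st_le :: "real measure \<Rightarrow> real measure \<Rightarrow> bool" where
  "st_le \<mu> \<nu> \<longleftrightarrow> (\<forall>t::real. measure \<mu> {..t} \<ge> measure \<nu> {..t})"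

definition in_Dplus :: "real measure \<Rightarrow> bool" where
  "in_Dplus \<mu> \<longleftrightarrow>
     (\<forall>(n::nat) (\<theta>::nat \<Rightarrow> real). n \<ge> 1 \<longrightarrow> (\<forall>i<n. \<theta> i \<ge> 0) \<longrightarrow> (\<Sum>i<n. \<theta> i) = 1 \<longrightarrow>
        st_le (distr (PiM {..<n} (\<lambda>_. \<mu>)) borel (\<lambda>x. \<Sum>i<n. \<theta> i * x i)) \<mu>)"

end

theory Submission imports Defs begin

lemma min_as_integral:
  fixes y K :: real assumes "K \<ge> 0"
  shows "ennreal (min y K) = (\<integral>\<^sup>+s. indicator {0..K} s * indicator {s<..} y \<partial>lborel)"
proof -
  have "(\<integral>\<^sup>+s. indicator {0..K} s * indicator {s<..} y \<partial>lborel)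
      = (\<integral>\<^sup>+s. indicator ({0..K} \<inter> {..<y}) s \<partial>lborel)"
    by (intro nn_integral_cong) (auto split: split_indicator)
  also have "\<dots> = emeasure lborel ({0..K} \<inter> {..<y})" by simp
  also have "\<dots> = ennreal (min y K)"
  proof (cases "y \<le> 0")
    case True
    then have "{0..K} \<inter> {..<y} = {}" by auto
    then show ?thesis using True by (simp add: ennreal_eq_0_iff)
  next
    case False
    show ?thesis
    proof (cases "y \<le> K")
      case True
      then have "{0..K} \<inter> {..<y} = {0..<y}" by auto
      then show ?thesis using True False by simp
    next
      case f2: False
      then have "{0..K} \<inter> {..<y} = {0..K}" by auto
      then show ?thesis using f2 assms by simp
    qed
  qed
  finally show ?thesis ..
qed

lemma layer:
  fixes f :: "'b \<Rightarrow> real"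
  assumes "prob_space (distr P borel f)" "f \<in> borel_measurable P" "K \<ge> 0"
  shows "(\<integral>\<^sup>+y. ennreal (min y K) \<partial>distr P borel f)
       = (\<integral>\<^sup>+s. indicator {0..K} s * emeasure (distr P borel f) {s<..} \<partial>lborel)"
proof -
  let ?\<mu> = "distr P borel f"
  interpret prob_space ?\<mu> by fact
  interpret pair_sigma_finite lborel ?\<mu> by unfold_locales
  have meas: "(\<lambda>(s,y). indicator {0..K} s * indicator {s<..} y :: ennreal) \<in> borel_measurable (lborel \<Otimes>\<^sub>M ?\<mu>)"
  proof -
    have "(\<lambda>(s,y). indicator {0..K} s * indicator {s<..} y :: ennreal) \<in> borel_measurable (lborel \<Otimes>\<^sub>M (borel::real measure))"
    proof -
      have [measurable]: "Measurable.pred (lborel \<Otimes>\<^sub>M borel) (\<lambda>x::real\<times>real. snd x \<in> {fst x<..})"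
        by (simp add: greaterThan_iff)
      show ?thesis by measurable
    qed
    moreover have "sets (lborel \<Otimes>\<^sub>M ?\<mu>) = sets (lborel \<Otimes>\<^sub>M (borel::real measure))"
      by (intro sets_pair_measure_cong) auto
    ultimately show ?thesis using measurable_cong_sets by blast
  qed
  have "(\<integral>\<^sup>+y. ennreal (min y K) \<partial>?\<mu>) = (\<integral>\<^sup>+y. (\<integral>\<^sup>+s. indicator {0..K} s * indicator {s<..} y \<partial>lborel) \<partial>?\<mu>)"
    using min_as_integral[OF assms(3)] by simp
  also have "\<dots> = (\<integral>\<^sup>+s. (\<integral>\<^sup>+y. indicator {0..K} s * indicator {s<..} y \<partial>?\<mu>) \<partial>lborel)"
    by (rule Fubini'[OF meas])
  also have "\<dots> = (\<integral>\<^sup>+s. indicator {0..K} s * emeasure ?\<mu> {s<..} \<partial>lborel)"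
    by (intro nn_integral_cong nn_integral_cmult_indicator) auto
  finally show ?thesis .
qed

lemma nondeg:
  fixes \<nu> :: "real measure"
  assumes P: "prob_space \<nu>" and sb: "sets \<nu> = sets borel"
    and nn: "emeasure \<nu> {..<0} = 0"
    and H: "\<And>K. emeasure \<nu> {..<K} = 0 \<or> emeasure \<nu> {K<..} = 0"
  shows "\<exists>c. AE y in \<nu>. y = c"
proof -
  interpret prob_space \<nu> by fact
  have sp: "space \<nu> = UNIV" using sb sets_eq_imp_space_eq by fastforce
  have sets[simp]: "A \<in> sets \<nu>" if "A \<in> sets borel" for A using that sb by simp
  define T where "T = {K. emeasure \<nu> {..<K} = 0}"
  have mono: "t \<in> T" if "t \<le> t'" "t' \<in> T" for t t'
  proof -
    have "emeasure \<nu> {..<t} \<le> emeasure \<nu> {..<t'}"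
      using that by (intro emeasure_mono) auto
    then show ?thesis using that unfolding T_def by simp
  qed
  have "0 \<in> T" using nn by (simp add: T_def)
  have ex: "\<exists>t. t \<notin> T"
  proof (rule ccontr)
    assume "\<not> ?thesis"
    then have "\<And>n::nat. {..<real n} \<in> null_sets \<nu>" by (auto simp: T_def null_sets_def)
    then have "(\<Union>n::nat. {..<real n}) \<in> null_sets \<nu>" by blast
    moreover have "(\<Union>n::nat. {..<real n}) = UNIV"
      by (auto intro: reals_Archimedean2)
    ultimately show False using emeasure_space_1 sp by (simp add: null_sets_def)
  qed
  have bdd: "bdd_above T"
  proof -
    obtain t where t: "t \<notin> T" using ex by blast
    have "x \<le> t" if "x \<in> T" for x using mono[of t x] t that by fastforce
    then show ?thesis by (auto simp: bdd_above_def)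
  qed
  define c where "c = Sup T"
  have low: "{..<c} \<in> null_sets \<nu>"
  proof -
    have "c - 1 / Suc n \<in> T" for n :: nat
    proof -
      have "c - 1 / Suc n < c" by simp
      then obtain t where "t \<in> T" "c - 1 / Suc n < t"
        using less_cSup_iff[of T] \<open>0 \<in> T\<close> bdd unfolding c_def by blast
      then show ?thesis using mono[of "c - 1 / Suc n" t] by simp
    qed
    then have "\<And>n::nat. {..<c - 1/Suc n} \<in> null_sets \<nu>" by (auto simp: T_def null_sets_def)
    then have "(\<Union>n::nat. {..<c - 1/Suc n}) \<in> null_sets \<nu>" by blast
    moreover have "(\<Union>n::nat. {..<c - 1/Suc n}) = {..<c}"
    proof (auto)
      fix x assume "x < c"
      then obtain n where "inverse (real (Suc n)) < c - x"
        using reals_Archimedean[of "c - x"] by auto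
      then show "\<exists>n. x < c - 1 / (1 + real n)" by (auto simp: field_simps)
    next
      fix x :: real and n :: nat assume "x < c - 1 / (1 + real n)"
      moreover have "0 < 1 / (1 + real n)" by simp
      ultimately show "x < c" by linarith
    qed
    ultimately show ?thesis by simp
  qed
  have high: "{c<..} \<in> null_sets \<nu>"
  proof -
    have "c + 1 / Suc n \<notin> T" for n :: nat
    proof
      assume "c + 1 / Suc n \<in> T"
      then have "c + 1 / Suc n \<le> c" unfolding c_def using bdd by (rule cSup_upper)
      then show False by (simp add: field_simps)
    qed
    then have "\<And>n::nat. {c + 1/Suc n<..} \<in> null_sets \<nu>" using H by (auto simp: T_def null_sets_def)
    then have "(\<Union>n::nat. {c + 1/Suc n<..}) \<in> null_sets \<nu>" by blast
    moreover have "(\<Union>n::nat. {c + 1/Suc n<..}) = {c<..}"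
    proof (auto)
      fix x assume "c < x"
      then obtain n where "inverse (real (Suc n)) < x - c"
        using reals_Archimedean[of "x - c"] by auto
      then show "\<exists>n. c + 1 / (1 + real n) < x" by (auto simp: field_simps)
    next
      fix x :: real and n :: nat assume "c + 1 / (1 + real n) < x"
      moreover have "0 < 1 / (1 + real n)" by simp
      ultimately show "c < x" by linarith
    qed
    ultimately show ?thesis by simp
  qed
  have "AE y in \<nu>. y = c"
    by (rule AE_I'[OF null_sets.Un[OF low high]]) auto
  then show ?thesis by blast
qed

lemma pw:
  fixes a b K :: real assumes "0 \<le> a" "0 \<le> b" "0 \<le> K"
  shows "ennreal (min a K) + ennreal (min b K) \<le> 2 * ennreal (min (1/2*a + 1/2*b) K)"
    and "a < K \<Longrightarrow> K < b \<Longrightarrow> ennreal (min a K) + ennreal (min b K) < 2 * ennreal (min (1/2*a + 1/2*b) K)"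
proof -
  have e1: "ennreal (min a K) + ennreal (min b K) = ennreal (min a K + min b K)"
    using assms by (simp add: ennreal_plus)
  have e2: "2 * ennreal (min (1/2*a + 1/2*b) K) = ennreal (2 * min (1/2*a + 1/2*b) K)"
    using assms by (simp add: ennreal_mult)
  show "ennreal (min a K) + ennreal (min b K) \<le> 2 * ennreal (min (1/2*a + 1/2*b) K)"
    unfolding e1 e2 by (rule ennreal_leI) (auto simp: min_def)
  assume "a < K" "K < b"
  then show "ennreal (min a K) + ennreal (min b K) < 2 * ennreal (min (1/2*a + 1/2*b) K)"
    unfolding e1 e2 using assms by (subst ennreal_less_iff) (auto simp: min_def)
qed

theorem mainTheorem10:
  fixes M :: "'a measure" and X :: "'a \<Rightarrow> real"
  assumes "prob_space M"
    and "X \<in> borel_measurable M"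
    and "AE \<omega> in M. X \<omega> \<ge> 0"
    and "\<not> (\<exists>c. AE \<omega> in M. X \<omega> = c)"
  shows "\<not> in_Dplus (distr M borel X)"
proof
  assume D: "in_Dplus (distr M borel X)"
  interpret M: prob_space M by fact
  define \<nu> where "\<nu> = distr M borel X"
  have P\<nu>: "prob_space \<nu>" unfolding \<nu>_def by (rule M.prob_space_distr) fact
  interpret \<nu>: prob_space \<nu> by fact
  have s\<nu>[simp]: "sets \<nu> = sets borel" "space \<nu> = UNIV" by (simp_all add: \<nu>_def)
  have bm\<nu>: "borel_measurable \<nu> = borel_measurable borel"
    by (rule measurable_cong_sets) auto
  have nn\<nu>: "AE y in \<nu>. 0 \<le> y" unfolding \<nu>_def
    using AE_distr_iff[of X M borel "\<lambda>y. 0 \<le> y"] assms(2,3) by simp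
  have null0: "emeasure \<nu> {..<0} = 0"
  proof -
    have "{x. \<not> 0 \<le> x} = {..<(0::real)}" by auto
    then show ?thesis using nn\<nu> AE_iff_measurable[of "{..<0}" \<nu> "\<lambda>y. 0 \<le> y"] by auto
  qed
  have "\<not> (\<forall>K. emeasure \<nu> {..<K} = 0 \<or> emeasure \<nu> {K<..} = 0)"
  proof
    assume H: "\<forall>K. emeasure \<nu> {..<K} = 0 \<or> emeasure \<nu> {K<..} = 0"
    obtain c where "AE y in \<nu>. y = c" using nondeg[OF P\<nu> s\<nu>(1) null0] H by blast
    then have "AE \<omega> in M. X \<omega> = c" unfolding \<nu>_def
      using AE_distr_iff[of X M borel "\<lambda>y. y = c"] assms(2) by simp
    with assms(4) show False by blast
  qed
  then obtain K where K1: "emeasure \<nu> {..<K} \<noteq> 0" and K2: "emeasure \<nu> {K<..} \<noteq> 0" by blast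
  have K0: "0 \<le> K"
  proof (rule ccontr)
    assume "\<not> 0 \<le> K"
    then have "emeasure \<nu> {..<K} \<le> emeasure \<nu> {..<0}" by (intro emeasure_mono) auto
    with null0 K1 show False by simp
  qed
  define N where "N = PiM {..<2::nat} (\<lambda>_. \<nu>)"
  have PN: "prob_space N" unfolding N_def by (rule prob_space_PiM) (rule P\<nu>)
  interpret N: prob_space N by fact
  have spN: "space N = PiE {..<2} (\<lambda>_. UNIV)" by (simp add: N_def space_PiM)
  have comp: "distr N \<nu> (\<lambda>x. x i) = \<nu>" if "i < 2" for i
    using distr_PiM_component[of "{..<2}" "\<lambda>_. \<nu>" i] P\<nu> that unfolding N_def by simp
  have measc: "(\<lambda>x. x i) \<in> measurable N \<nu>" if "i < 2" for i
    unfolding N_def using that by (intro measurable_component_singleton) auto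
  have measc': "(\<lambda>x. x i) \<in> borel_measurable N" if "i < 2" for i
    using measc[OF that] measurable_cong_sets[of N N \<nu> borel] by simp
  define g where "g y = ennreal (min y K)" for y
  have gm: "g \<in> borel_measurable \<nu>" unfolding bm\<nu> g_def by measurable
  have int_comp: "(\<integral>\<^sup>+y. g y \<partial>\<nu>) = (\<integral>\<^sup>+x. g (x i) \<partial>N)" if "i < 2" for i
  proof -
    have "(\<integral>\<^sup>+y. g y \<partial>\<nu>) = (\<integral>\<^sup>+y. g y \<partial>distr N \<nu> (\<lambda>x. x i))" using comp[OF that] by simp
    also have "\<dots> = (\<integral>\<^sup>+x. g (x i) \<partial>N)" using gm by (intro nn_integral_distr[OF measc[OF that]]) simp
    finally show ?thesis .
  qed
  have ae_comp: "AE x in N. 0 \<le> x i" if "i < 2" for i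
  proof -
    have "AE y in distr N \<nu> (\<lambda>x. x i). 0 \<le> y" by (subst comp[OF that]) (rule nn\<nu>)
    then show ?thesis using AE_distr_iff[OF measc[OF that], of "\<lambda>y. 0 \<le> y"] by simp
  qed
  define S where "S = (\<lambda>x::nat\<Rightarrow>real. \<Sum>i<2. 1/2 * x i)"
  have Seq: "S x = 1/2 * x 0 + 1/2 * x 1" for x by (simp add: S_def numeral_2_eq_2)
  have Sm: "S \<in> borel_measurable N" unfolding S_def
    by (intro borel_measurable_sum borel_measurable_times borel_measurable_const measc') auto
  have st: "st_le (distr N borel S) \<nu>"
    using D[unfolded \<nu>_def[symmetric] in_Dplus_def, rule_format, of 2 "\<lambda>_. 1/2"]
    by (simp add: N_def S_def)
  define \<rho> where "\<rho> = distr N borel S"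
  have P\<rho>: "prob_space \<rho>" unfolding \<rho>_def by (rule N.prob_space_distr) (rule Sm)
  interpret \<rho>: prob_space \<rho> by fact
  have cmp: "emeasure \<rho> {s<..} \<le> emeasure \<nu> {s<..}" for s
  proof -
    have le: "measure \<nu> {..s} \<le> measure \<rho> {..s}" using st unfolding st_le_def \<rho>_def by blast
    have c1: "{s<..} = space \<rho> - {..s}" by (auto simp: \<rho>_def)
    have c2: "{s<..} = space \<nu> - {..s}" by auto
    have "emeasure \<rho> {s<..} = ennreal (1 - measure \<rho> {..s})"
      by (subst \<rho>.emeasure_eq_measure, subst c1, subst \<rho>.prob_compl) (auto simp: \<rho>_def)
    also have "\<dots> \<le> ennreal (1 - measure \<nu> {..s})" using le by (intro ennreal_leI) auto
    also have "\<dots> = emeasure \<nu> {s<..}"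
      by (subst \<nu>.emeasure_eq_measure, subst c2, subst \<nu>.prob_compl) auto
    finally show ?thesis .
  qed
  define I0 where "I0 = (\<integral>\<^sup>+y. g y \<partial>\<nu>)"
  define I1 where "I1 = (\<integral>\<^sup>+y. g y \<partial>\<rho>)"
  have I1I0: "I1 \<le> I0"
  proof -
    have "I1 = (\<integral>\<^sup>+s. indicator {0..K} s * emeasure \<rho> {s<..} \<partial>lborel)"
      unfolding I1_def g_def \<rho>_def by (rule layer[OF P\<rho>[unfolded \<rho>_def] Sm K0])
    also have "\<dots> \<le> (\<integral>\<^sup>+s. indicator {0..K} s * emeasure \<nu> {s<..} \<partial>lborel)"
      by (intro nn_integral_mono mult_left_mono cmp) auto
    also have "\<dots> = I0"
      unfolding I0_def g_def \<nu>_def by (rule layer[OF P\<nu>[unfolded \<nu>_def] assms(2) K0, symmetric])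
    finally show ?thesis .
  qed
  have gb: "g \<in> borel_measurable borel" unfolding g_def by measurable
  have I1N: "I1 = (\<integral>\<^sup>+x. g (S x) \<partial>N)"
  proof -
    show ?thesis unfolding I1_def \<rho>_def by (rule nn_integral_distr[OF Sm]) (use gb in simp)
  qed
  have I0fin: "I0 \<noteq> top"
  proof -
    have "I0 \<le> (\<integral>\<^sup>+y. ennreal K \<partial>\<nu>)" unfolding I0_def g_def
      by (intro nn_integral_mono ennreal_leI min.cobounded2)
    also have "\<dots> = ennreal K * emeasure \<nu> (space \<nu>)" by (rule nn_integral_const)
    also have "\<dots> = ennreal K" using \<nu>.emeasure_space_1 by (metis mult_1_right)
    finally show ?thesis using ennreal_less_top[of K] by (metis not_le top.extremum_strict)
  qed
  have gm2: "(\<lambda>x. g (x i)) \<in> borel_measurable N" if "i < 2" for i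
    using measurable_compose[OF measc'[OF that] gb] by simp
  have gSm: "(\<lambda>x. g (S x)) \<in> borel_measurable N" using measurable_compose[OF Sm gb] by simp
  have lhs: "(\<integral>\<^sup>+x. g (x 0) + g (x 1) \<partial>N) = 2 * I0"
    by (subst nn_integral_add) (auto simp: gm2 int_comp[symmetric] I0_def mult_2)
  have rhs: "(\<integral>\<^sup>+x. 2 * g (S x) \<partial>N) = 2 * I1"
    by (subst nn_integral_cmult) (auto simp: gSm I1N)
  have nn2: "AE x in N. 0 \<le> x 0 \<and> 0 \<le> x 1" using ae_comp[of 0] ae_comp[of 1] by auto
  have less: "(\<integral>\<^sup>+x. g (x 0) + g (x 1) \<partial>N) < (\<integral>\<^sup>+x. 2 * g (S x) \<partial>N)"
  proof (rule nn_integral_less)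
    show "(\<lambda>x. g (x 0) + g (x 1)) \<in> borel_measurable N" using gm2 by auto
    show "(\<lambda>x. 2 * g (S x)) \<in> borel_measurable N" using gSm by auto
    show "(\<integral>\<^sup>+x. g (x 0) + g (x 1) \<partial>N) \<noteq> \<infinity>" unfolding lhs infinity_ennreal_def using I0fin
      by (simp add: ennreal_mult_eq_top_iff)
    show "AE x in N. g (x 0) + g (x 1) \<le> 2 * g (S x)"
      using nn2
    proof eventually_elim
      case (elim x)
      show ?case unfolding g_def Seq by (rule pw(1)) (use elim K0 in auto)
    qed
    show "\<not> (AE x in N. 2 * g (S x) \<le> g (x 0) + g (x 1))"
    proof
      assume "AE x in N. 2 * g (S x) \<le> g (x 0) + g (x 1)"
      with nn2 have "AE x in N. \<not> (x 0 < K \<and> K < x 1)"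
      proof eventually_elim
        case (elim x)
        show ?case
        proof
          assume "x 0 < K \<and> K < x 1"
          then have "g (x 0) + g (x 1) < 2 * g (S x)" unfolding g_def Seq
            by (intro pw(2)) (use elim K0 in auto)
          with elim show False by simp
        qed
      qed
      define A where "A = PiE {..<2::nat} (\<lambda>i. if i = 0 then {..<K} else {K<..})"
      have two: "{..<2::nat} = {0,1}" by auto
      have Aeq: "{x \<in> space N. \<not> \<not> (x 0 < K \<and> K < x 1)} = A"
      proof (intro set_eqI iffI)
        fix x assume "x \<in> {x \<in> space N. \<not> \<not> (x 0 < K \<and> K < x 1)}"
        then have x: "x \<in> PiE {..<2} (\<lambda>_. UNIV)" "x 0 < K" "K < x 1" unfolding spN by blast+
        show "x \<in> A" unfolding A_def
        proof (rule PiE_I)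
          fix i :: nat assume "i \<in> {..<2}"
          then have "i = 0 \<or> i = 1" by auto
          then show "x i \<in> (if i = 0 then {..<K} else {K<..})" using x(2,3) by auto
        next
          fix i :: nat assume "i \<notin> {..<2}"
          then show "x i = undefined" using PiE_arb[OF x(1)] by blast
        qed
      next
        fix x assume xA: "x \<in> A"
        have "x 0 \<in> {..<K}" using PiE_mem[OF xA[unfolded A_def], of 0] by simp
        moreover have "x 1 \<in> {K<..}" using PiE_mem[OF xA[unfolded A_def], of 1] by simp
        moreover have "x \<in> PiE {..<2} (\<lambda>_. UNIV)"
        proof (rule PiE_I)
          fix i :: nat assume "i \<notin> {..<2}"
          then show "x i = undefined" using PiE_arb[OF xA[unfolded A_def]] by blast
        qed simp
        ultimately show "x \<in> {x \<in> space N. \<not> \<not> (x 0 < K \<and> K < x 1)}" unfolding spN by simp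
      qed
      have Asets: "A \<in> sets N" unfolding A_def N_def by (intro sets_PiM_I_finite) auto
      have A0: "emeasure N A = 0"
        using AE_iff_measurable[OF Asets Aeq] \<open>AE x in N. \<not> (x 0 < K \<and> K < x 1)\<close> by simp
      interpret PP: product_sigma_finite "\<lambda>_::nat. \<nu>" by unfold_locales
      have "emeasure N A = emeasure \<nu> {..<K} * emeasure \<nu> {K<..}"
        unfolding N_def A_def by (subst PP.emeasure_PiM) (auto simp: numeral_2_eq_2 lessThan_Suc mult_ac)
      then have "emeasure N A \<noteq> 0" using K1 K2 by simp
      with A0 show False by simp
    qed
  qed
  have "2 * I0 < 2 * I1" using less unfolding lhs rhs .
  moreover have "2 * I1 \<le> 2 * I0" using I1I0 by (intro mult_left_mono) auto
  ultimately show False by simp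
qed

end
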